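(* There is no functional $M_o$ of type level $3$, computable (Kleene S1–S9) in some type $2$ functional, such that $\mathsf{WPR}(M_o)$ holds.
   Context: $C=2^{\mathbb N}$; for $f\in C$, $\overline{f}n=\langle f(0),\dots,f(n-1)\rangle$ and $[\sigma]$ is the set of $g\in C$ extending $\sigma$. For $F,G:C\to\mathbb N$, $\mathsf{LOC}(F,G)$ means $(\forall f,g\in C)\big(g\in[\overline{f}G(f)]\to F(g)\le G(f)\big)$. $\mathsf{WPR}(M_o)$ (weak Pincherle realiser) means $(\forall F^2,G^2)\big(\mathsf{LOC}(F,G)\to(\forall f\in C)(F(f)\le M_o(F,G))\big)$. *)

theory Defs
  imports Main "HOL-Library.Countable"
begin

type_synonym tp1 = "nat \<Rightarrow> nat"
type_synonym tp2 = "(nat \<Rightarrow> nat) \<Rightarrow> nat"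

definition cantor :: "tp1 \<Rightarrow> bool" where
  "cantor f \<longleftrightarrow> (\<forall>n. f n \<le> 1)"

definition LOC :: "tp2 \<Rightarrow> tp2 \<Rightarrow> bool" where
  "LOC F G \<longleftrightarrow> (\<forall>f g. cantor f \<and> cantor g \<and> (\<forall>i < G f. g i = f i) \<longrightarrow> F g \<le> G f)"

definition WPR :: "(tp2 \<Rightarrow> tp2 \<Rightarrow> nat) \<Rightarrow> bool" where
  "WPR M \<longleftrightarrow> (\<forall>F G. LOC F G \<longrightarrow> (\<forall>f. cantor f \<longrightarrow> F f \<le> M F G))"

text \<open>Kleene indices for schemes S1-S9, arguments split by type:
  a list of type-0, a list of type-1, a list of type-2 arguments.\<close>
datatype kidx =
    KS1
  | KS2 nat
  | KS3
  | KS4 kidx kidx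
  | KS5 kidx kidx
  | KS6 "nat list" "nat list" "nat list" kidx
  | KS7
  | KS8 kidx
  | KS9

instance kidx :: countable by countable_datatype

definition is_perm :: "nat list \<Rightarrow> nat \<Rightarrow> bool" where
  "is_perm p n \<longleftrightarrow> distinct p \<and> set p = {..<n}"

text \<open>kc e ns fs Fs m : "{e}(ns, fs, Fs) = m" (Kleene computation, S1-S9).
  Natural-number codes of indices (for S9) are given by from_nat.\<close>
inductive kc :: "kidx \<Rightarrow> nat list \<Rightarrow> tp1 list \<Rightarrow> tp2 list \<Rightarrow> nat \<Rightarrow> bool" where
  s1: "kc KS1 (x # ns) fs Fs (Suc x)"
| s2: "kc (KS2 q) ns fs Fs q"
| s3: "kc KS3 (x # ns) fs Fs x"
| s4: "kc e2 ns fs Fs m \<Longrightarrow> kc e1 (m # ns) fs Fs n \<Longrightarrow> kc (KS4 e1 e2) ns fs Fs n"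
| s5_0: "kc e1 ns fs Fs n \<Longrightarrow> kc (KS5 e1 e2) (0 # ns) fs Fs n"
| s5_S: "kc (KS5 e1 e2) (x # ns) fs Fs m \<Longrightarrow> kc e2 (m # x # ns) fs Fs n
          \<Longrightarrow> kc (KS5 e1 e2) (Suc x # ns) fs Fs n"
| s6: "is_perm p (length ns) \<Longrightarrow> is_perm q (length fs) \<Longrightarrow> is_perm r (length Fs)
       \<Longrightarrow> kc e (map (nth ns) p) (map (nth fs) q) (map (nth Fs) r) n
       \<Longrightarrow> kc (KS6 p q r e) ns fs Fs n"
| s7: "kc KS7 (x # ns) (\<alpha> # fs) Fs (\<alpha> x)"
| s8: "(\<forall>y. kc e (y # ns) fs (F # Fs) (g y)) \<Longrightarrow> kc (KS8 e) ns fs (F # Fs) (F g)"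
| s9: "kc (from_nat a) ns fs Fs n \<Longrightarrow> kc KS9 (a # ns) fs Fs n"

end

theory Submission
  imports Defs "HOL-Library.Countable"
begin

inductive kcp :: "tp1 set \<Rightarrow> kidx \<Rightarrow> nat list \<Rightarrow> tp1 list \<Rightarrow> tp2 list \<Rightarrow> nat \<Rightarrow> bool" for D where
  p1: "kcp D KS1 (x # ns) fs Fs (Suc x)"
| p2: "kcp D (KS2 q) ns fs Fs q"
| p3: "kcp D KS3 (x # ns) fs Fs x"
| p4: "kcp D e2 ns fs Fs m \<Longrightarrow> kcp D e1 (m # ns) fs Fs n \<Longrightarrow> kcp D (KS4 e1 e2) ns fs Fs n"
| p5_0: "kcp D e1 ns fs Fs n \<Longrightarrow> kcp D (KS5 e1 e2) (0 # ns) fs Fs n"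
| p5_S: "kcp D (KS5 e1 e2) (x # ns) fs Fs m \<Longrightarrow> kcp D e2 (m # x # ns) fs Fs n
          \<Longrightarrow> kcp D (KS5 e1 e2) (Suc x # ns) fs Fs n"
| p6: "is_perm p (length ns) \<Longrightarrow> is_perm q (length fs) \<Longrightarrow> is_perm r (length Fs)
       \<Longrightarrow> kcp D e (map (nth ns) p) (map (nth fs) q) (map (nth Fs) r) n
       \<Longrightarrow> kcp D (KS6 p q r e) ns fs Fs n"
| p7: "kcp D KS7 (x # ns) (\<alpha> # fs) Fs (\<alpha> x)"
| p8: "g \<in> D \<Longrightarrow> (\<forall>y. kcp D e (y # ns) fs (F # Fs) (g y)) \<Longrightarrow> kcp D (KS8 e) ns fs (F # Fs) (F g)"
| p9: "kcp D (from_nat a) ns fs Fs n \<Longrightarrow> kcp D KS9 (a # ns) fs Fs n"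

lemma kc_det: "kc e ns fs Fs m \<Longrightarrow> kc e ns fs Fs m' \<Longrightarrow> m = m'"
proof (induction arbitrary: m' rule: kc.induct)
  case (s8 e ns fs F Fs g)
  from s8.prems obtain g' where g': "\<forall>y. kc e (y # ns) fs (F # Fs) (g' y)" and m': "m' = F g'"
    by (cases rule: kc.cases) auto
  have "g = g'" using s8.IH g' by blast
  then show ?case using m' by simp
next
  case (s1 x ns fs Fs) then show ?case by (cases rule: kc.cases) auto
next
  case (s2 q ns fs Fs) then show ?case by (cases rule: kc.cases) auto
next
  case (s3 x ns fs Fs) then show ?case by (cases rule: kc.cases) auto
next
  case (s4 e2 ns fs Fs m e1 n)
  from s4.prems obtain m2 where "kc e2 ns fs Fs m2" "kc e1 (m2 # ns) fs Fs m'"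
    by (cases rule: kc.cases) auto
  then show ?case using s4.IH by metis
next
  case (s5_0 e1 ns fs Fs n e2)
  from s5_0.prems have "kc e1 ns fs Fs m'" by (cases rule: kc.cases) auto
  then show ?case using s5_0.IH by metis
next
  case (s5_S e1 e2 x ns fs Fs m n)
  from s5_S.prems obtain m2 where "kc (KS5 e1 e2) (x # ns) fs Fs m2" "kc e2 (m2 # x # ns) fs Fs m'"
    by (cases rule: kc.cases) auto
  then show ?case using s5_S.IH by metis
next
  case (s6 p ns q fs r Fs e n)
  from s6.prems have "kc e (map (nth ns) p) (map (nth fs) q) (map (nth Fs) r) m'"
    by (cases rule: kc.cases) auto
  then show ?case using s6.IH by metis
next
  case (s7 x ns \<alpha> fs Fs) then show ?case by (cases rule: kc.cases) auto
next
  case (s9 a ns fs Fs n)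
  from s9.prems have "kc (from_nat a) ns fs Fs m'" by (cases rule: kc.cases) auto
  then show ?case using s9.IH by metis
qed

lemma kcp_kc: "kcp D e ns fs Fs m \<Longrightarrow> kc e ns fs Fs m"
  by (induction rule: kcp.induct) (auto intro: kc.intros)

lemma kcp_mono: "kcp D e ns fs Fs m \<Longrightarrow> D \<subseteq> D' \<Longrightarrow> kcp D' e ns fs Fs m"
  by (induction rule: kcp.induct) (auto intro: kcp.intros)

lemma kcp_agree: "kcp D e ns fs Fs m \<Longrightarrow> length Fs' = length Fs \<Longrightarrow>
   (\<forall>i<length Fs. \<forall>g\<in>D. (Fs' ! i) g = (Fs ! i) g) \<Longrightarrow> kcp D e ns fs Fs' m"
proof (induction arbitrary: Fs' rule: kcp.induct)
  case (p6 p ns q fs r Fs e n)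
  have sr: "set r = {..<length Fs}" using p6.hyps(3) by (simp add: is_perm_def)
  have "kcp D e (map (nth ns) p) (map (nth fs) q) (map (nth Fs') r) n"
  proof (rule p6.IH)
    show "length (map ((!) Fs') r) = length (map ((!) Fs) r)" by simp
    show "\<forall>i<length (map ((!) Fs) r). \<forall>g\<in>D. (map ((!) Fs') r ! i) g = (map ((!) Fs) r ! i) g"
    proof (intro allI impI ballI)
      fix i g assume i: "i < length (map ((!) Fs) r)" and g: "g \<in> D"
      have "r ! i \<in> set r" using i by simp
      then have "r ! i < length Fs" using sr by auto
      then show "(map ((!) Fs') r ! i) g = (map ((!) Fs) r ! i) g" using p6.prems g i by simp
    qed
  qed
  then show ?case using p6 by (auto intro!: kcp.p6)
next
  case (p8 g e ns fs F Fs)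
  then obtain F' Fs0 where Fs': "Fs' = F' # Fs0" by (cases Fs') auto
  have "\<forall>y. kcp D e (y # ns) fs (F' # Fs0) (g y)" using p8 Fs' by blast
  then have "kcp D (KS8 e) ns fs (F' # Fs0) (F' g)" using p8.hyps by (auto intro: kcp.p8)
  moreover have "F' g = F g" using p8.prems p8.hyps Fs' by force
  ultimately show ?case using Fs' by simp
qed (auto intro: kcp.intros)

definition gR :: "(tp1 \<times> nat) set \<Rightarrow> tp2" where
  "gR R f = (if f \<in> Domain R then (THE n. (f, n) \<in> R) else 0)"

definition base :: "tp2 \<Rightarrow> (tp1 \<times> nat) set \<Rightarrow> tp2 list" where
  "base \<Phi> R = [\<Phi>, \<lambda>_. 0, gR R]"

definition wit :: "tp2 \<Rightarrow> (tp1 \<times> nat) set \<Rightarrow> tp1 \<Rightarrow> nat \<Rightarrow> bool" where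
  "wit \<Phi> R f n \<longleftrightarrow> (\<exists>e ns r. n = Suc (to_nat (e, ns, r :: nat list)) \<and>
      (\<forall>y. kcp (Domain R) e (y # ns) [] (map (nth (base \<Phi> R)) r) (f y)))"

definition consR :: "tp2 \<Rightarrow> (tp1 \<times> nat) set \<Rightarrow> bool" where
  "consR \<Phi> R \<longleftrightarrow> single_valued R \<and> (\<forall>(f, n)\<in>R. wit \<Phi> R f n)"

lemma gR_eq: "single_valued R \<Longrightarrow> (f, n) \<in> R \<Longrightarrow> gR R f = n"
  unfolding gR_def single_valued_def by (auto intro: the_equality)

lemma base_agree:
  assumes sv: "single_valued R'" and sub: "R \<subseteq> R'" and g: "g \<in> Domain R"
  shows "(base \<Phi> R' ! k) g = (base \<Phi> R ! k) g"
proof -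
  obtain n where gn: "(g, n) \<in> R" using g by auto
  have svR: "single_valued R" using sv sub single_valued_subset by blast
  have "gR R' g = gR R g" using gR_eq[OF sv] gR_eq[OF svR] gn sub by auto
  then show ?thesis unfolding base_def
    by (cases k; cases "k - 1"; cases "k - 2"; simp)
qed

lemma wit_mono:
  assumes sv: "single_valued R'" and sub: "R \<subseteq> R'" and w: "wit \<Phi> R f n"
  shows "wit \<Phi> R' f n"
proof -
  obtain e ns r where n: "n = Suc (to_nat (e, ns, r :: nat list))"
    and k: "\<forall>y. kcp (Domain R) e (y # ns) [] (map (nth (base \<Phi> R)) r) (f y)"
    using w unfolding wit_def by blast
  have "\<forall>y. kcp (Domain R') e (y # ns) [] (map (nth (base \<Phi> R')) r) (f y)"
  proof
    fix y
    have "kcp (Domain R) e (y # ns) [] (map (nth (base \<Phi> R')) r) (f y)"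
      using kcp_agree[OF k[rule_format, of y]] base_agree[OF sv sub] by simp
    then show "kcp (Domain R') e (y # ns) [] (map (nth (base \<Phi> R')) r) (f y)"
      by (rule kcp_mono) (use sub in auto)
  qed
  then show ?thesis unfolding wit_def using n by blast
qed

lemma closure_lemma:
  assumes cl: "\<forall>g e ns r. (\<forall>y. kcp D e (y # ns) [] (map (nth B) r) (g y)) \<longrightarrow> g \<in> D"
  shows "kc e ns fs Fs m \<Longrightarrow> fs = [] \<Longrightarrow> (\<exists>r. Fs = map (nth B) r) \<Longrightarrow> kcp D e ns fs Fs m"
proof (induction rule: kc.induct)
  case (s6 p ns q fs r Fs e n)
  obtain r0 where r0: "Fs = map (nth B) r0" using s6.prems by blast
  have q: "q = []" using s6.hyps(2) s6.prems(1) by (simp add: is_perm_def)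
  have sr: "set r = {..<length Fs}" using s6.hyps(3) by (simp add: is_perm_def)
  have eq: "map (nth Fs) r = map (nth B) (map (nth r0) r)"
  proof (rule nth_equalityI)
    show "length (map ((!) Fs) r) = length (map ((!) B) (map ((!) r0) r))" by simp
    fix i assume i: "i < length (map ((!) Fs) r)"
    have "r ! i \<in> set r" using i by simp
    then have "r ! i < length r0" using sr r0 by auto
    then show "map ((!) Fs) r ! i = map ((!) B) (map ((!) r0) r) ! i" using i r0 by simp
  qed
  have ex: "\<exists>ra. map (nth Fs) r = map (nth B) ra" using eq by blast
  have "kcp D e (map (nth ns) p) (map (nth fs) q) (map (nth Fs) r) n"
    using s6.IH[OF _ ex] q by simp
  then show ?case using s6.hyps by (auto intro: kcp.p6)
next
  case (s8 e ns fs F Fs g)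
  have IH: "\<forall>y. kcp D e (y # ns) fs (F # Fs) (g y)" using s8.IH s8.prems by simp
  from s8.prems(2) obtain r where r: "F # Fs = map (nth B) r" ..
  have "g \<in> D" using cl IH r s8.prems(1) by metis
  then show ?case using IH by (auto intro: kcp.p8)
qed (auto intro: kcp.intros)

theorem theorem3p14:
  shows "\<not> (\<exists>(M :: tp2 \<Rightarrow> tp2 \<Rightarrow> nat) (\<Phi> :: tp2) (e :: kidx).
            (\<forall>F G. kc e [] [] [\<Phi>, F, G] (M F G)) \<and> WPR M)"
proof
  assume "\<exists>(M :: tp2 \<Rightarrow> tp2 \<Rightarrow> nat) (\<Phi> :: tp2) (e :: kidx).
            (\<forall>F G. kc e [] [] [\<Phi>, F, G] (M F G)) \<and> WPR M"
  then obtain M \<Phi> e where comp: "\<forall>F G. kc e [] [] [\<Phi>, F, G] (M F G)" and W: "WPR M" by blast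
  let ?A = "{R. consR \<Phi> R}"
  have "\<forall>C\<in>chains ?A. \<Union>C \<in> ?A"
  proof
    fix C assume C: "C \<in> chains ?A"
    have sv: "single_valued (\<Union>C)"
      unfolding single_valued_def
    proof (intro allI impI)
      fix x y z assume xy: "(x, y) \<in> \<Union>C" and xz: "(x, z) \<in> \<Union>C"
      then obtain R1 R2 where R12: "R1 \<in> C" "R2 \<in> C" "(x, y) \<in> R1" "(x, z) \<in> R2" by blast
      have ch: "R1 \<subseteq> R2 \<or> R2 \<subseteq> R1" using chainsD[OF C] R12 by blast
      have "single_valued R1" "single_valued R2" using chainsD2[OF C] R12 by (auto simp: consR_def)
      then show "y = z" using ch R12 unfolding single_valued_def by blast
    qed
    have "wit \<Phi> (\<Union>C) f n" if fn: "(f, n) \<in> \<Union>C" for f n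
    proof -
      obtain R where R: "R \<in> C" "(f, n) \<in> R" using fn by blast
      then have "consR \<Phi> R" using chainsD2[OF C] by auto
      then have "wit \<Phi> R f n" using R unfolding consR_def by auto
      moreover have "R \<subseteq> \<Union>C" using R by blast
      ultimately show ?thesis using wit_mono[OF sv] by blast
    qed
    then show "\<Union>C \<in> ?A" using sv unfolding consR_def by auto
  qed
  from Zorn_Lemma[OF this] obtain R where R: "consR \<Phi> R" and max: "\<forall>X\<in>?A. R \<subseteq> X \<longrightarrow> X = R"
    by auto
  have svR: "single_valued R" using R by (simp add: consR_def)
  define D where "D = Domain R"
  have closed: "\<forall>g e ns r. (\<forall>y. kcp D e (y # ns) [] (map (nth (base \<Phi> R)) r) (g y)) \<longrightarrow> g \<in> D"
  proof (intro allI impI)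
    fix g e ns r assume k: "\<forall>y. kcp D e (y # ns) [] (map (nth (base \<Phi> R)) r) (g y)"
    show "g \<in> D"
    proof (rule ccontr)
      assume gD: "g \<notin> D"
      define R' where "R' = insert (g, Suc (to_nat (e, ns, r))) R"
      have sub: "R \<subseteq> R'" by (auto simp: R'_def)
      have sv': "single_valued R'" using svR gD unfolding R'_def D_def single_valued_def by auto
      have w0: "wit \<Phi> R g (Suc (to_nat (e, ns, r)))"
        using k unfolding wit_def D_def by blast
      have w1: "wit \<Phi> R' g (Suc (to_nat (e, ns, r)))"
        by (rule wit_mono[OF sv' sub w0])
      have "\<forall>(f, n)\<in>R'. wit \<Phi> R' f n"
        using w1 R wit_mono[OF sv' sub] unfolding R'_def consR_def by auto
      then have "R' \<in> ?A" using sv' by (simp add: consR_def)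
      then have "R' = R" using max sub by blast
      then show False using gD by (auto simp: R'_def D_def)
    qed
  qed
  have inj: "f = f'" if "(f, n) \<in> R" "(f', n) \<in> R" for f f' n
  proof -
    from that R have w: "wit \<Phi> R f n" "wit \<Phi> R f' n" unfolding consR_def by auto
    obtain e1 ns r where n: "n = Suc (to_nat (e1, ns, r :: nat list))"
      and k: "\<forall>y. kcp (Domain R) e1 (y # ns) [] (map (nth (base \<Phi> R)) r) (f y)"
      using w(1) unfolding wit_def by blast
    obtain e1' ns' r' where n': "n = Suc (to_nat (e1', ns', r' :: nat list))"
      and k': "\<forall>y. kcp (Domain R) e1' (y # ns') [] (map (nth (base \<Phi> R)) r') (f' y)"
      using w(2) unfolding wit_def by blast
    have eq: "e1' = e1" "ns' = ns" "r' = r" using n n' by auto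
    show ?thesis
    proof
      fix y
      have "kc e1 (y # ns) [] (map (nth (base \<Phi> R)) r) (f y)" using k kcp_kc by blast
      moreover have "kc e1 (y # ns) [] (map (nth (base \<Phi> R)) r) (f' y)" using k' kcp_kc eq by blast
      ultimately show "f y = f' y" by (rule kc_det)
    qed
  qed
  have hval: "\<exists>k. n = Suc k" if "(f, n) \<in> R" for f n
    using that R unfolding consR_def wit_def by auto
  define N where "N = M (\<lambda>_. 0) (gR R)"
  have "kc e [] [] (base \<Phi> R) N" using comp unfolding N_def base_def by simp
  moreover have "\<exists>r. base \<Phi> R = map (nth (base \<Phi> R)) r"
    by (rule exI[of _ "[0, 1, 2]"]) (simp add: base_def)
  ultimately have kp: "kcp D e [] [] (base \<Phi> R) N"
    using closure_lemma[OF closed] by blast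
  define h :: tp1 where "h = (\<lambda>k. if \<exists>f. (f, Suc k) \<in> R
      then (if (SOME f. (f, Suc k) \<in> R) k = 0 then 1 else 0) else 0)"
  have hdiff: "h k \<noteq> f k" if fk: "(f, Suc k) \<in> R" for f k
  proof -
    have "(SOME f. (f, Suc k) \<in> R, Suc k) \<in> R" using someI[of "\<lambda>f. (f, Suc k) \<in> R" f] fk by blast
    then have "(SOME f. (f, Suc k) \<in> R) = f" using inj fk by blast
    then show ?thesis using fk unfolding h_def by auto
  qed
  have hC: "cantor h" by (simp add: cantor_def h_def)
  have hD: "h \<notin> D"
  proof
    assume "h \<in> D"
    then obtain n where hn: "(h, n) \<in> R" unfolding D_def by auto
    then obtain k where "n = Suc k" using hval by blast
    then show False using hdiff hn by blast
  qed
  define F' :: tp2 where "F' = (\<lambda>g. if g = h then Suc N else 0)"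
  define G' :: tp2 where "G' = (\<lambda>f. if f \<in> D then gR R f else Suc N)"
  have agr: "\<forall>i<length (base \<Phi> R). \<forall>g\<in>D. ([\<Phi>, F', G'] ! i) g = (base \<Phi> R ! i) g"
  proof (intro allI impI ballI)
    fix i g assume i: "i < length (base \<Phi> R)" and g: "g \<in> D"
    have "i = 0 \<or> i = 1 \<or> i = 2" using i by (auto simp: base_def)
    moreover have "g \<noteq> h" using g hD by blast
    ultimately show "([\<Phi>, F', G'] ! i) g = (base \<Phi> R ! i) g"
      using g by (auto simp: base_def F'_def G'_def)
  qed
  have "kcp D e [] [] [\<Phi>, F', G'] N"
    by (rule kcp_agree[OF kp _ agr]) (simp add: base_def)
  then have "kc e [] [] [\<Phi>, F', G'] N" by (rule kcp_kc)
  then have MN: "M F' G' = N" using comp kc_det by metis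
  have "LOC F' G'" unfolding LOC_def
  proof (intro allI impI, elim conjE)
    fix f g assume cf: "cantor f" "cantor g" and agr: "\<forall>i<G' f. g i = f i"
    show "F' g \<le> G' f"
    proof (cases "g = h")
      case False then show ?thesis by (simp add: F'_def)
    next
      case gh: True
      show ?thesis
      proof (cases "f \<in> D")
        case True
        then obtain n where fn: "(f, n) \<in> R" unfolding D_def by auto
        obtain k where nk: "n = Suc k" using hval fn by blast
        then have "h k \<noteq> f k" using hdiff fn by simp
        moreover have "G' f = Suc k" using True fn nk gR_eq[OF svR] by (simp add: G'_def)
        ultimately show ?thesis using agr gh by auto
      next
        case False then show ?thesis by (simp add: F'_def G'_def)
      qed
    qed
  qed
  then have "F' h \<le> M F' G'" using W hC unfolding WPR_def by blast
  then show False using MN by (simp add: F'_def)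
qed

end
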